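(* Let $T>0$ and $\gamma>0$ be real. For $p\in\mathbb{C}^+$ define $$g(p)=T\frac{\gamma-p}{\gamma+p}\,p,\qquad h(p)=g(p)-Tp,\qquad V(p)=e^{h(p)}.$$ Let $k\in\mathcal{K}(T)$ and $K(i\omega)=(\mathcal{F}k)(i\omega)$. Then: (i) $V\in H^\infty$, and $\widehat K(i\omega)=V(i\omega)K(i\omega)$ extends to a function $\widehat K(p)$ on $\mathbb{C}^+$ belonging to $H^2\cap H^\infty$. (ii) $|V(i\omega)|=\exp\!\left(\dfrac{2T\gamma\omega^2}{\gamma^2+\omega^2}\right)$ for all $\omega\in\mathbb{R}$. (iii) $\sup_{\gamma>0}|V(i\omega)|\le e^{T|\omega|}$ for all $\omega\in\mathbb{R}$. (iv) $V(i\omega)\to1$ as $\gamma\to+\infty$, for every $\omega\in\mathbb{R}$. (v) For every $\varepsilon>0$ and every $\Omega>0$ there exists $\gamma>0$ such that $|V(i\omega)-1|\le\varepsilon$ for all $\omega\in[-\Omega,\Omega]$.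
   Context: $\mathbb{C}^+=\{p\in\mathbb{C}:\operatorname{Re}p>0\}$. Fourier transform: $(\mathcal{F}k)(i\omega)=\int_{-\infty}^\infty e^{-i\omega t}k(t)\,dt$. Hardy spaces: for $r\in[1,\infty]$, $H^r$ is the space of holomorphic functions $h$ on $\mathbb{C}^+$ with $\sup_{s>0}\|h(s+i\cdot)\|_{L_r(\mathbb{R})}<\infty$. $\mathcal{K}(T)$ is the set of functions $k\in L_\infty(\mathbb{R})$, $k:\mathbb{R}\to\mathbb{R}$, with $k(t)=0$ for $t\notin[-T,0]$. *)

theory Defs
  imports "HOL-Analysis.Analysis"
begin

definition rhp :: "complex set" where
  "rhp = {p. Re p > 0}"

definition hardy :: "real \<Rightarrow> (complex \<Rightarrow> complex) \<Rightarrow> bool" where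
  "hardy r h \<longleftrightarrow> h holomorphic_on rhp \<and>
     (\<forall>s>0. integrable lborel (\<lambda>\<omega>::real. cmod (h (Complex s \<omega>)) powr r)) \<and>
     (\<exists>B. \<forall>s>0. (LINT \<omega>|lborel. cmod (h (Complex s \<omega>)) powr r) powr (1 / r) \<le> B)"

(* Hardy space H^infinity (for holomorphic, hence continuous, h the ess-sup on each
   line is the sup, so the condition is boundedness on C^+) *)
definition hardy_inf :: "(complex \<Rightarrow> complex) \<Rightarrow> bool" where
  "hardy_inf h \<longleftrightarrow> h holomorphic_on rhp \<and> (\<exists>B. \<forall>p\<in>rhp. cmod (h p) \<le> B)"

(* Fourier transform (F k)(i omega) = int e^{-i omega t} k(t) dt, as function of omega *)
definition fourier :: "(real \<Rightarrow> real) \<Rightarrow> real \<Rightarrow> complex" where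
  "fourier k \<omega> = (LINT t|lborel. exp (- (\<i> * of_real \<omega> * of_real t)) * of_real (k t))"

definition Kclass :: "real \<Rightarrow> (real \<Rightarrow> real) set" where
  "Kclass T = {k. k \<in> borel_measurable lborel \<and> (\<exists>B. AE t in lborel. \<bar>k t\<bar> \<le> B)
                  \<and> (\<forall>t. t \<notin> {-T..0} \<longrightarrow> k t = 0)}"

definition gfun :: "real \<Rightarrow> real \<Rightarrow> complex \<Rightarrow> complex" where
  "gfun T \<gamma> p = of_real T * ((of_real \<gamma> - p) / (of_real \<gamma> + p)) * p"

definition hfun :: "real \<Rightarrow> real \<Rightarrow> complex \<Rightarrow> complex" where
  "hfun T \<gamma> p = gfun T \<gamma> p - of_real T * p"

definition Vfun :: "real \<Rightarrow> real \<Rightarrow> complex \<Rightarrow> complex" where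
  "Vfun T \<gamma> p = exp (hfun T \<gamma> p)"

end

theory Submission
  imports Defs
begin


lemma hfun_alt:
  assumes "of_real \<gamma> + p \<noteq> 0"
  shows "hfun T \<gamma> p = - 2 * of_real T * p^2 / (of_real \<gamma> + p)"
  using assms unfolding hfun_def gfun_def
  by (simp add: field_simps power2_eq_square)

lemma hfun_alt2:
  assumes "of_real \<gamma> + p \<noteq> 0"
  shows "hfun T \<gamma> p = - 2 * of_real T * (p - of_real \<gamma> + of_real (\<gamma>^2) / (of_real \<gamma> + p))"
  using assms unfolding hfun_def gfun_def
  by (simp add: field_simps power2_eq_square)

lemma Re_inv_nonneg:
  assumes "\<gamma> > 0" "Re p \<ge> 0" "c \<ge> 0"
  shows "Re (of_real c / (of_real \<gamma> + p)) \<ge> 0"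
proof -
  have "Re (of_real c / (of_real \<gamma> + p)) = c * (\<gamma> + Re p) / (cmod (of_real \<gamma> + p))^2"
    by (simp add: Re_divide cmod_power2)
  then show ?thesis using assms by simp
qed

lemma gp_ne0: "\<gamma> > 0 \<Longrightarrow> Re p \<ge> 0 \<Longrightarrow> of_real \<gamma> + p \<noteq> 0"
  by (metis add_pos_nonneg less_numeral_extra(3) plus_complex.simps(1) Re_complex_of_real zero_complex.simps(1))

lemma Re_hfun_le:
  assumes "T > 0" "\<gamma> > 0" "Re p \<ge> 0"
  shows "Re (hfun T \<gamma> p) \<le> 2*T*\<gamma> - 2*T*Re p"
proof -
  define w where "w = of_real (\<gamma>^2) / (of_real \<gamma> + p)"
  have w: "Re w \<ge> 0" unfolding w_def
    by (rule Re_inv_nonneg) (use assms in auto)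
  have "hfun T \<gamma> p = of_real (- 2 * T) * (p - of_real \<gamma> + w)"
    unfolding w_def by (subst hfun_alt2[OF gp_ne0[OF assms(2,3)]]) simp
  then have eq: "Re (hfun T \<gamma> p) = - 2 * T * (Re p - \<gamma> + Re w)"
    by simp
  have tw: "0 \<le> T * Re w" using w assms by simp
  show ?thesis unfolding eq using tw by (simp add: algebra_simps)
qed

lemma norm_V_le:
  assumes "T > 0" "\<gamma> > 0" "Re p \<ge> 0"
  shows "cmod (Vfun T \<gamma> p) \<le> exp (2*T*\<gamma> - 2*T*Re p)"
  using Re_hfun_le[OF assms] by (simp add: Vfun_def)

lemma V_holo: "\<gamma> > 0 \<Longrightarrow> Vfun T \<gamma> holomorphic_on {p. Re p > - \<gamma>}"
  unfolding Vfun_def hfun_def gfun_def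
  apply (intro holomorphic_intros)
  by (metis add.commute add_less_same_cancel1 add_uminus_conv_diff diff_add_cancel mem_Collect_eq neg_less_0_iff_less not_less_iff_gr_or_eq plus_complex.simps(1) Re_complex_of_real zero_complex.simps(1))

lemma hfun_iw: "\<gamma> > 0 \<Longrightarrow> hfun T \<gamma> (\<i> * of_real w) = of_real (2*T*w^2) / (of_real \<gamma> + \<i> * of_real w)"
  apply (subst hfun_alt) 
   apply (metis gp_ne0 Re_complex_of_real Re_i_times Im_complex_of_real order_refl neg_0_equal_iff_equal)
  by (simp add: power_mult_distrib)

lemma norm_V_iw: "\<gamma> > 0 \<Longrightarrow> cmod (Vfun T \<gamma> (\<i> * of_real w)) = exp (2 * T * \<gamma> * w^2 / (\<gamma>^2 + w^2))"
  unfolding Vfun_def norm_exp_eq_Re hfun_iw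
  by (simp add: Re_divide power2_eq_square cmod_power2 field_simps)

lemma norm_h_iw: "\<gamma> > 0 \<Longrightarrow> T > 0 \<Longrightarrow> cmod (hfun T \<gamma> (\<i> * of_real w)) \<le> 2*T*w^2/\<gamma>"
proof -
  assume a: "\<gamma> > 0" "T > 0"
  have "\<gamma> \<le> cmod (of_real \<gamma> + \<i> * of_real w)"
    using complex_Re_le_cmod[of "of_real \<gamma> + \<i> * of_real w"] by simp
  then show ?thesis using a unfolding hfun_iw[OF a(1)]
    by (simp only: norm_divide norm_of_real) (intro frac_le, auto)
qed



lemma norm_exp_quad:
  fixes z :: complex
  assumes "norm z \<le> 1 / 2"
  shows "norm (exp z - 1 - z) \<le> norm z ^ 2"
proof (cases "z = 0")
  case False
  have sums: "(\<lambda>k. z ^ (k + 2) /\<^sub>R fact (k + 2)) sums (exp z - (\<Sum>k<2. z ^ k /\<^sub>R fact k))"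
    by (intro sums_split_initial_segment exp_converges)
  have "summable (\<lambda>k. norm z ^ (k + 2) /\<^sub>R fact (k + 2))"
    using summable_norm_exp[of z]
    by (intro summable_norm summable_ignore_initial_segment)
       (auto simp: norm_power norm_divide divide_simps)
  also have "?this \<longleftrightarrow> summable (\<lambda>k. norm z ^ 2 * (norm z ^ k / fact (k +2)))"
    by (simp add: power_add mult_ac divide_simps power2_eq_square del: of_nat_Suc of_nat_add)
  also have "\<dots> \<longleftrightarrow> summable (\<lambda>k. norm z ^ k / fact (k + 2))"
    by (subst summable_cmult_iff) (use \<open>z \<noteq> 0\<close> in auto)
  finally have summable: "summable (\<lambda>k. norm z ^ k / fact (k + 2))" .
  have "exp z - 1 - z = (\<Sum>k. z ^ (k + 2) / fact (k + 2))"
    using sums by (simp add: sums_iff scaleR_conv_of_real divide_simps eval_nat_numeral)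
  also have "norm \<dots> \<le> (\<Sum>k. norm (z ^ (k + 2) / fact (k + 2)))"
    using summable_norm_exp[of z]
    by (intro summable_norm summable_ignore_initial_segment)
       (auto simp: norm_power norm_divide divide_simps)
  also have "\<dots> = (\<Sum>k. norm z ^ 2 * (norm z ^ k / fact (k + 2)))"
    by (simp add: power_add norm_power norm_divide mult_ac norm_mult power2_eq_square del: of_nat_Suc)
  also have "\<dots> = norm z ^ 2 * (\<Sum>k. norm z ^ k / fact (k + 2))"
    using summable by (rule suminf_mult)
  also have "\<dots> \<le> norm z ^ 2 * (1 / (1 - norm z) / 2)"
  proof (intro mult_left_mono, rule sums_le)
    show "(\<lambda>k. norm z ^ k / fact (k + 2)) sums (\<Sum>k. norm z ^ k / fact (k + 2))"
      using summable by blast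
    show "(\<lambda>k. norm z ^ k / 2) sums (1 / (1 - norm z) / 2)"
      using assms by (intro geometric_sums sums_divide) auto
  next
    fix k :: nat
    have "norm z ^ k / fact (k + 2) \<le> norm z ^ k / fact 2"
      by (intro divide_left_mono fact_mono) auto
    thus "norm z ^ k / fact (k + 2) \<le> norm z ^ k / 2"
      by simp
  qed (auto simp: divide_simps)
  also have "\<dots> \<le> norm z ^ 2 * 1"
    using assms by (intro mult_left_mono) (auto simp: divide_simps)
  finally show ?thesis by simp
qed auto

lemma int_bound:
  fixes f :: "real \<Rightarrow> complex"
  assumes [measurable]: "f \<in> borel_measurable lborel" and c: "c \<ge> 0" and T: "T \<ge> 0"
    and ae: "AE t in lborel. norm (f t) \<le> c * indicator {-T..0} t"
  shows "integrable lborel f" "norm (integral\<^sup>L lborel f) \<le> c * T"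
proof -
  have i: "integrable lborel (\<lambda>t. c * indicator {-T..0} t :: real)"
    by (intro integrable_mult_right integrable_real_indicator) (auto simp: emeasure_lborel_Icc_eq)
  show int: "integrable lborel f"
    by (rule Bochner_Integration.integrable_bound[OF i]) (use ae c in \<open>auto simp: indicator_def\<close>)
  have "norm (integral\<^sup>L lborel f) \<le> (LINT t|lborel. norm (f t))"
    by (rule integral_norm_bound)
  also have "\<dots> \<le> (LINT t|lborel. c * indicator {-T..0} t)"
    by (intro integral_mono_AE int i integrable_norm ae)
  also have "\<dots> = c * T" using T by simp
  finally show "norm (integral\<^sup>L lborel f) \<le> c * T" .
qed

lemma ae_mult_bound:
  assumes ae: "AE t in lborel. \<bar>f t\<bar> \<le> M * indicator {-T..0} t"
    and E: "\<And>t. t \<in> {-T..0} \<Longrightarrow> cmod (E t) \<le> c" and c: "c \<ge> 0"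
  shows "AE t in lborel. cmod (E t * of_real (f t)) \<le> (c * M) * indicator {-T..0} t"
  using ae
proof eventually_elim
  case (elim t)
  show ?case
  proof (cases "t \<in> {-T..0}")
    case True
    then have "cmod (E t * of_real (f t)) = cmod (E t) * \<bar>f t\<bar>" by (simp add: norm_mult)
    also have "\<dots> \<le> c * M" using elim True E[OF True] c
      by (intro mult_mono) auto
    finally show ?thesis using True by simp
  next
    case False
    then show ?thesis using elim by simp
  qed
qed

definition Lap :: "(real \<Rightarrow> real) \<Rightarrow> complex \<Rightarrow> complex" where
  "Lap f p = (LINT t|lborel. exp (- (p * of_real t)) * of_real (f t))"

lemma norm_exp_pt:
  assumes "t \<in> {-T..0}" "T \<ge> 0"
  shows "cmod (exp (- (p * of_real t))) \<le> exp (T * \<bar>Re p\<bar>)"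
proof -
  have "- (Re p * t) \<le> T * \<bar>Re p\<bar>"
  proof -
    have "- (Re p * t) \<le> \<bar>Re p\<bar> * \<bar>t\<bar>" by (metis abs_ge_minus_self abs_mult)
    also have "\<dots> \<le> \<bar>Re p\<bar> * T" using assms by (intro mult_left_mono) auto
    finally show ?thesis by (simp add: mult.commute)
  qed
  then show ?thesis by (simp add: norm_exp_eq_Re)
qed

locale kfun =
  fixes T M :: real and f :: "real \<Rightarrow> real"
  assumes T: "T > 0" and M: "M \<ge> 0" and fm[measurable]: "f \<in> borel_measurable lborel"
    and fb: "AE t in lborel. \<bar>f t\<bar> \<le> M * indicator {-T..0} t"
begin

lemma Lap_int: "integrable lborel (\<lambda>t. exp (- (p * of_real t)) * of_real (f t))"
  and Lap_bound: "cmod (Lap f p) \<le> exp (T * \<bar>Re p\<bar>) * M * T"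
proof -
  have ae: "AE t in lborel. cmod (exp (- (p * of_real t)) * of_real (f t)) \<le> (exp (T * \<bar>Re p\<bar>) * M) * indicator {-T..0} t"
    by (rule ae_mult_bound[OF fb norm_exp_pt]) (use T in auto)
  show "integrable lborel (\<lambda>t. exp (- (p * of_real t)) * of_real (f t))"
    by (rule int_bound(1)[OF _ _ _ ae]) (use T M in auto)
  show "cmod (Lap f p) \<le> exp (T * \<bar>Re p\<bar>) * M * T"
    unfolding Lap_def by (rule int_bound(2)[OF _ _ _ ae]) (use T M in auto)
qed


definition D where "D (p::complex) = (LINT t|lborel. (- of_real t * exp (- (p * of_real t))) * of_real (f t))"

lemma D_int: "integrable lborel (\<lambda>t. (- of_real t * exp (- ((p::complex) * of_real t))) * of_real (f t))"
proof -
  have ae: "AE t in lborel. cmod ((- (of_real t::complex) * exp (- (p * of_real t))) * of_real (f t)) \<le> (T * exp (T * \<bar>Re p\<bar>) * M) * indicator {-T..0} t"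
  proof (rule ae_mult_bound[OF fb])
    fix t assume t: "t \<in> {-T..0}"
    have "cmod (- of_real t * exp (- (p * of_real t))) = \<bar>t\<bar> * cmod (exp (- (p * of_real t)))"
      by (simp add: norm_mult)
    also have "\<dots> \<le> T * exp (T * \<bar>Re p\<bar>)"
      using t T norm_exp_pt[OF t, of p] by (intro mult_mono) auto
    finally show "cmod (- of_real t * exp (- (p * of_real t))) \<le> T * exp (T * \<bar>Re p\<bar>)" .
  qed (use T in auto)
  show ?thesis
    by (rule int_bound(1)[OF _ _ _ ae]) (use T M in auto)
qed

lemma Lap_quad:
  assumes h: "cmod h \<le> 1 / (2*T)"
  shows "cmod (Lap f (p + h) - Lap f p - h * D p) \<le> (exp (T * \<bar>Re p\<bar>) * (cmod h ^ 2 * T^2) * M) * T"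
proof -
  have "Lap f (p + h) - Lap f p - h * D p =
    (LINT t|lborel. exp (- ((p + h) * of_real t)) * of_real (f t) - exp (- (p * of_real t)) * of_real (f t)
        - h * ((- of_real t * exp (- (p * of_real t))) * of_real (f t)))"
    unfolding Lap_def D_def
    using Lap_int[of "p+h"] Lap_int[of p] D_int[of p]
    by (simp add: integral_diff integrable_diff integral_mult_right_zero)
  also have "\<dots> = (LINT t|lborel. (exp (- (p * of_real t)) * (exp (- (h * of_real t)) - 1 - (- (h * of_real t)))) * of_real (f t))"
  proof (intro Bochner_Integration.integral_cong refl)
    fix t
    have "exp (- ((p + h) * of_real t)) = exp (- (p * of_real t)) * exp (- (h * of_real t))"
      by (simp add: exp_add[symmetric] algebra_simps)
    then show "exp (- ((p + h) * of_real t)) * of_real (f t) - exp (- (p * of_real t)) * of_real (f t)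
        - h * ((- of_real t * exp (- (p * of_real t))) * of_real (f t)) =
        (exp (- (p * of_real t)) * (exp (- (h * of_real t)) - 1 - (- (h * of_real t)))) * of_real (f t)"
      by (simp add: algebra_simps)
  qed
  also have "cmod \<dots> \<le> (exp (T * \<bar>Re p\<bar>) * (cmod h ^ 2 * T^2) * M) * T"
  proof (rule int_bound(2))
    show "AE t in lborel. cmod ((exp (- (p * of_real t)) * (exp (- (h * of_real t)) - 1 - (- (h * of_real t)))) * of_real (f t))
      \<le> (exp (T * \<bar>Re p\<bar>) * (cmod h ^ 2 * T^2) * M) * indicator {-T..0} t"
    proof (rule ae_mult_bound[OF fb])
      fix t assume t: "t \<in> {-T..0}"
      have tT: "\<bar>t\<bar> \<le> T" using t by auto
      have "cmod (- (h * of_real t)) = cmod h * \<bar>t\<bar>" by (simp add: norm_mult)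
      also have "\<dots> \<le> cmod h * T" using tT by (intro mult_left_mono) auto
      finally have ht: "cmod (- (h * of_real t)) \<le> cmod h * T" .
      also have "\<dots> \<le> 1/2" using h T by (simp add: field_simps)
      finally have "cmod (exp (- (h * of_real t)) - 1 - (- (h * of_real t))) \<le> cmod (- (h * of_real t)) ^ 2"
        by (rule norm_exp_quad)
      also have "\<dots> \<le> (cmod h * T)^2"
        using ht by (intro power_mono) auto
      finally have q: "cmod (exp (- (h * of_real t)) - 1 - (- (h * of_real t))) \<le> cmod h ^ 2 * T^2"
        by (simp add: power_mult_distrib)
      show "cmod (exp (- (p * of_real t)) * (exp (- (h * of_real t)) - 1 - (- (h * of_real t)))) \<le> exp (T * \<bar>Re p\<bar>) * (cmod h ^ 2 * T^2)"
        unfolding norm_mult using norm_exp_pt[OF t, of p] T q by (intro mult_mono) auto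
    qed simp
  qed (use T M in auto)
  finally show ?thesis .
qed

lemma Lap_deriv: "(Lap f has_field_derivative D p) (at p)"
proof -
  define C where "C = exp (T * \<bar>Re p\<bar>) * T^2 * M * T"
  have "((\<lambda>h. (Lap f (p + h) - Lap f p) / h - D p) \<longlongrightarrow> 0) (at 0)"
  proof (rule Lim_null_comparison)
    have "\<forall>\<^sub>F h in at (0::complex). h \<noteq> 0 \<and> cmod h < 1 / (2*T)"
      using T by (auto simp: eventually_at intro!: exI[of _ "1/(2*T)"])
    then show "\<forall>\<^sub>F h in at 0. cmod ((Lap f (p + h) - Lap f p) / h - D p) \<le> C * cmod h"
    proof eventually_elim
      case (elim h)
      have "(Lap f (p + h) - Lap f p) / h - D p = (Lap f (p + h) - Lap f p - h * D p) / h"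
        using elim by (simp add: field_simps)
      also have "cmod \<dots> \<le> (exp (T * \<bar>Re p\<bar>) * (cmod h ^ 2 * T^2) * M) * T / cmod h"
        unfolding norm_divide using elim by (intro divide_right_mono Lap_quad) auto
      also have "\<dots> = C * cmod h" using elim by (simp add: C_def power2_eq_square field_simps)
      finally show ?case .
    qed
    show "((\<lambda>h. C * cmod h) \<longlongrightarrow> 0) (at 0)"
      by (rule tendsto_eq_intros | simp)+
  qed
  then show ?thesis
    unfolding DERIV_def by (simp add: Lim_null[symmetric])
qed

lemma Lap_holo: "Lap f holomorphic_on S"
proof -
  have "Lap f field_differentiable at x" for x
    using Lap_deriv by (auto simp: field_differentiable_def)
  then show ?thesis by (auto simp: holomorphic_on_def intro: field_differentiable_at_within)
qed

lemma Lap_cont: "continuous_on S (Lap f)"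
  using Lap_deriv by (intro continuous_at_imp_continuous_on) (auto intro: DERIV_isCont)

end



lemma orth:
  fixes j :: int assumes T: "T > 0"
  shows "(LINT t|lborel. indicator {-T..0} t *\<^sub>R exp (\<i> * of_real (real_of_int j * (2*pi/T)) * of_real t))
     = (if j = 0 then T else 0)"
proof (cases "j = 0")
  case True
  then show ?thesis using T by (simp add: scaleR_conv_of_real)
next
  case False
  define c where "c = \<i> * of_real (real_of_int j * (2*pi/T))"
  have c0: "c \<noteq> 0" using False T by (simp add: c_def)
  have "(LINT t|lborel. indicator {-T..0} t *\<^sub>R exp (c * of_real t)) = (LBINT t=ereal (-T)..ereal 0. exp (c * of_real t))"
    using T interval_integral_Icc[of "-T" 0 "\<lambda>t. exp (c * of_real t)"] by (simp add: set_lebesgue_integral_def zero_ereal_def)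
  also have "\<dots> = exp (c * of_real 0) / c - exp (c * of_real (-T)) / c"
  proof (rule interval_integral_FTC_finite)
    show "continuous_on {min (- T) 0..max (- T) 0} (\<lambda>t. exp (c * complex_of_real t))"
      by (intro continuous_intros)
    fix x
    have "((\<lambda>z. exp (c * z) / c) has_field_derivative exp (c * of_real x)) (at (of_real x))"
      using c0 by (auto intro!: derivative_eq_intros)
    then show "((\<lambda>t. exp (c * of_real t) / c) has_vector_derivative exp (c * of_real x)) (at x within {min (- T) 0..max (- T) 0})"
      by (rule has_vector_derivative_real_field)
  qed
  also have "exp (c * of_real (-T)) = exp ((2 * of_int (-j) * pi) * \<i>)"
    using T by (simp add: c_def field_simps)
  also have "\<dots> = 1" by (rule exp_integer_2pi) simp
  finally show ?thesis using False by (simp add: c_def)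
qed

lemma int_prod_bound:
  fixes a b :: "real \<Rightarrow> complex"
  assumes [measurable]: "a \<in> borel_measurable lborel" "b \<in> borel_measurable lborel"
    and A: "AE t in lborel. cmod (a t) \<le> A * indicator {-T..0} t" and B: "AE t in lborel. cmod (b t) \<le> B"
    and "A \<ge> 0" "B \<ge> 0" "T \<ge> 0"
  shows "integrable lborel (\<lambda>t. a t * b t)"
proof (rule int_bound(1))
  show "AE t in lborel. cmod (a t * b t) \<le> (A * B) * indicator {-T..0} t"
    using A B
  proof eventually_elim
    case (elim t)
    have "cmod (a t * b t) \<le> (A * indicator {-T..0} t) * B"
      unfolding norm_mult using elim assms by (intro mult_mono) auto
    then show ?case by (simp add: mult_ac)
  qed
qed (use assms in auto)

context kfun
begin

lemma bessel:
  fixes a :: real and N :: nat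
  shows "(\<Sum>n<N. cmod (Lap f (\<i> * of_real (a + real n * (2*pi/T))))^2) \<le> T * (T * M^2)"
proof -
  define P where "P = 2*pi/T"
  define w where "w n = a + real n * P" for n
  define c where "c n = Lap f (\<i> * of_real (w n))" for n
  define e where "e n t = exp (\<i> * of_real (w n) * of_real t)" for n and t :: real
  define chi where "chi t = (indicator {-T..0} t :: real)" for t
  define ft where "ft t = complex_of_real (f t)" for t
  define g where "g t = (\<Sum>n<N. c n * e n t) * of_real (chi t) / of_real T" for t
  define S where "S = (\<Sum>n<N. cmod (c n)^2)"
  define Cg where "Cg = (\<Sum>n<N. cmod (c n)) / T"
  have [measurable]: "ft \<in> borel_measurable lborel" unfolding ft_def by measurable
  have [measurable]: "(\<lambda>t. e n t) \<in> borel_measurable lborel" for n unfolding e_def by measurable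
  have [measurable]: "chi \<in> borel_measurable lborel" unfolding chi_def by measurable
  have [measurable]: "g \<in> borel_measurable lborel" unfolding g_def by measurable
  have [measurable]: "(\<lambda>t. cnj (ft t)) \<in> borel_measurable lborel" "(\<lambda>t. cnj (g t)) \<in> borel_measurable lborel"
    by (rule borel_measurable_continuous_on[OF continuous_on_cnj[OF continuous_on_id]], measurable)+
  have [measurable]: "(\<lambda>t. cnj (e n t)) \<in> borel_measurable lborel" for n
    by (rule borel_measurable_continuous_on[OF continuous_on_cnj[OF continuous_on_id]], measurable)+
  have ne: "cmod (e n t) = 1" for n t unfolding e_def by (simp add: norm_exp_eq_Re)
  have Cg0: "Cg \<ge> 0" unfolding Cg_def using T by (intro divide_nonneg_pos sum_nonneg) auto
  have gb: "cmod (g t) \<le> Cg * chi t" for t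
  proof -
    have "cmod (\<Sum>n<N. c n * e n t) \<le> (\<Sum>n<N. cmod (c n))"
      by (rule order_trans[OF norm_sum]) (simp add: norm_mult ne)
    then show ?thesis using T unfolding g_def Cg_def chi_def
      by (auto simp: norm_mult norm_divide indicator_def divide_right_mono)
  qed
  have ftb: "AE t in lborel. cmod (ft t) \<le> M * indicator {-T..0} t"
    using fb by eventually_elim (simp add: ft_def chi_def)
  have ftb': "AE t in lborel. cmod (ft t) \<le> M"
    using fb by eventually_elim (use M in \<open>auto simp: ft_def indicator_def of_bool_def split: if_splits\<close>)
  have gb': "AE t in lborel. cmod (g t) \<le> Cg * indicator {-T..0} t" using gb by (simp add: chi_def)
  have gb'': "AE t in lborel. cmod (g t) \<le> Cg"
  proof (rule AE_I2)
    fix t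
    have "Cg * chi t \<le> Cg" using Cg0 by (auto simp: chi_def indicator_def)
    then show "cmod (g t) \<le> Cg" using gb[of t] by linarith
  qed
  have cftb: "AE t in lborel. cmod (cnj (ft t)) \<le> M" using ftb' by simp
  have cgb: "AE t in lborel. cmod (cnj (g t)) \<le> Cg" using gb'' by simp
  have i1: "integrable lborel (\<lambda>t. ft t * cnj (ft t))"
    by (rule int_prod_bound[OF _ _ ftb cftb]) (use M T in auto)
  have i2: "integrable lborel (\<lambda>t. ft t * cnj (g t))"
    by (rule int_prod_bound[OF _ _ ftb cgb]) (use M T Cg0 in auto)
  have i3: "integrable lborel (\<lambda>t. g t * cnj (ft t))"
    by (rule int_prod_bound[OF _ _ gb' cftb]) (use M T Cg0 in \<open>auto simp: chi_def\<close>)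
  have i4: "integrable lborel (\<lambda>t. g t * cnj (g t))"
    by (rule int_prod_bound[OF _ _ gb' cgb]) (use M T Cg0 in \<open>auto simp: chi_def\<close>)
  have ie: "integrable lborel (\<lambda>t. cnj (e n t) * ft t)" for n
  proof -
    have "cnj (e n t) = exp (- (\<i> * of_real (w n) * of_real t))" for t
      by (simp add: e_def exp_cnj)
    then show ?thesis using Lap_int[of "\<i> * of_real (w n)"] by (simp add: ft_def)
  qed
  have ce: "(LINT t|lborel. cnj (e n t) * ft t) = c n" for n
  proof -
    have "cnj (e n t) = exp (- (\<i> * of_real (w n) * of_real t))" for t
      by (simp add: e_def exp_cnj)
    then show ?thesis by (simp add: ft_def c_def Lap_def)
  qed
  define If where "If = (LINT t|lborel. (f t)^2)"
  have I1: "(LINT t|lborel. ft t * cnj (ft t)) = of_real If"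
  proof -
    have "ft t * cnj (ft t) = of_real ((f t)^2)" for t by (simp add: ft_def power2_eq_square)
    then show ?thesis unfolding If_def by (simp only: integral_complex_of_real)
  qed
  have If_le: "If \<le> M^2 * T"
  proof -
    have sq: "\<And>x::real. \<bar>x\<bar> \<le> M \<Longrightarrow> x^2 \<le> M^2" by (metis abs_ge_zero power2_abs power_mono)
    have fi: "integrable lborel (\<lambda>t. (f t)^2)"
    proof (rule Bochner_Integration.integrable_bound)
      show "integrable lborel (\<lambda>t. M^2 * indicator {-T..0} t :: real)"
        by (intro integrable_mult_right integrable_real_indicator) (auto simp: emeasure_lborel_Icc_eq)
      show "AE t in lborel. norm ((f t)^2) \<le> norm (M^2 * indicator {-T..0} t :: real)"
        using fb by eventually_elim (auto simp: indicator_def intro: sq)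
    qed measurable
    have "If \<le> (LINT t|lborel. M^2 * indicator {-T..0} t)"
      unfolding If_def
    proof (rule integral_mono_AE[OF fi])
      show "integrable lborel (\<lambda>t. M^2 * indicator {-T..0} t :: real)"
        by (intro integrable_mult_right integrable_real_indicator) (auto simp: emeasure_lborel_Icc_eq)
      show "AE t in lborel. (f t)^2 \<le> M^2 * indicator {-T..0} t"
        using fb by eventually_elim (auto simp: indicator_def intro: sq)
    qed
    also have "\<dots> = M^2 * T" using T by simp
    finally show ?thesis .
  qed
  have I2: "(LINT t|lborel. ft t * cnj (g t)) = of_real (S / T)"
  proof -
    have "AE t in lborel. ft t * cnj (g t) = (\<Sum>n<N. cnj (c n) * (cnj (e n t) * ft t)) / of_real T"
      using fb
    proof eventually_elim
      case (elim t)
      show ?case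
      proof (cases "t \<in> {-T..0}")
        case True
        then show ?thesis by (simp add: g_def chi_def cnj_sum sum_distrib_left sum_divide_distrib algebra_simps)
      next
        case False
        then show ?thesis using elim by (simp add: ft_def)
      qed
    qed
    then have "(LINT t|lborel. ft t * cnj (g t)) = (LINT t|lborel. (\<Sum>n<N. cnj (c n) * (cnj (e n t) * ft t)) / of_real T)"
      by (intro integral_cong_AE) auto
    also have "\<dots> = (\<Sum>n<N. cnj (c n) * c n) / of_real T"
      using ie by (simp add: integral_sum ce)
    also have "\<dots> = of_real (S / T)"
      by (simp add: S_def mult.commute[of "cnj _"] complex_norm_square[symmetric])
    finally show ?thesis .
  qed
  have I3: "(LINT t|lborel. g t * cnj (ft t)) = of_real (S / T)"
  proof -
    have "(LINT t|lborel. g t * cnj (ft t)) = (LINT t|lborel. cnj (ft t * cnj (g t)))"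
      by (simp add: mult.commute)
    also have "\<dots> = cnj (LINT t|lborel. ft t * cnj (g t))" by (rule Bochner_Integration.integral_cnj)
    also have "\<dots> = of_real (S / T)" using I2 by simp
    finally show ?thesis .
  qed
  have orth': "(LINT t|lborel. e n t * cnj (e m t) * of_real (chi t)) = (if n = m then T else 0)" for n m
  proof -
    have "e n t * cnj (e m t) * of_real (chi t) = indicator {-T..0} t *\<^sub>R exp (\<i> * of_real (real_of_int (int n - int m) * (2*pi/T)) * of_real t)" for t
    proof -
      have "e n t * cnj (e m t) = exp (\<i> * of_real (w n) * of_real t + (- (\<i> * of_real (w m) * of_real t)))"
        unfolding exp_add by (simp add: e_def exp_cnj)
      also have "\<i> * of_real (w n) * of_real t + (- (\<i> * of_real (w m) * of_real t)) = \<i> * of_real (real_of_int (int n - int m) * (2*pi/T)) * of_real t"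
        using T by (simp add: w_def P_def field_simps)
      finally show ?thesis by (simp add: chi_def scaleR_conv_of_real mult.commute)
    qed
    then show ?thesis using orth[OF T, of "int n - int m"] by simp
  qed
  have ie2: "integrable lborel (\<lambda>t. e n t * cnj (e m t) * of_real (chi t))" for n m
  proof -
    have "AE t in lborel. cmod (e n t * cnj (e m t) * of_real (chi t)) \<le> 1 * indicator {-T..0} t"
      by (simp add: norm_mult ne chi_def)
    then show ?thesis by (rule int_bound(1)[rotated 3]) (use T in auto)
  qed
  have I4: "(LINT t|lborel. g t * cnj (g t)) = of_real (S / T)"
  proof -
    have "g t * cnj (g t) = (\<Sum>n<N. \<Sum>m<N. c n * cnj (c m) * (e n t * cnj (e m t) * of_real (chi t))) / of_real (T^2)" for t
    proof -
      have chi2: "of_real (chi t) * of_real (chi t) = (of_real (chi t) :: complex)"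
        by (simp add: chi_def indicator_def)
      have "g t * cnj (g t) = ((\<Sum>n<N. c n * e n t) * (\<Sum>m<N. cnj (c m) * cnj (e m t))) * (of_real (chi t) * of_real (chi t)) / of_real (T^2)"
        by (simp add: g_def cnj_sum power2_eq_square)
      also have "\<dots> = (\<Sum>n<N. \<Sum>m<N. c n * cnj (c m) * (e n t * cnj (e m t) * of_real (chi t))) / of_real (T^2)"
        unfolding chi2 sum_product by (simp add: sum_distrib_right sum_distrib_left mult_ac)
      finally show ?thesis .
    qed
    then have "(LINT t|lborel. g t * cnj (g t)) = (LINT t|lborel. (\<Sum>n<N. \<Sum>m<N. c n * cnj (c m) * (e n t * cnj (e m t) * of_real (chi t))) / of_real (T^2))"
      by simp
    also have "\<dots> = (\<Sum>n<N. \<Sum>m<N. c n * cnj (c m) * (if n = m then T else 0)) / of_real (T^2)"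
      using ie2 by (simp add: integral_sum integrable_sum orth' del: of_real_power)
    also have "\<dots> = (\<Sum>n<N. c n * cnj (c n) * T) / of_real (T^2)"
      by (simp add: if_distrib cong: if_cong)
    also have "\<dots> = of_real (S / T)"
      using T by (simp add: S_def complex_norm_square[symmetric] sum_distrib_right[symmetric] power2_eq_square del: of_real_mult) (simp add: field_simps)
    finally show ?thesis .
  qed
  define Q where "Q = (LINT t|lborel. (cmod (ft t - g t))^2)"
  have Q0: "Q \<ge> 0" unfolding Q_def by (intro Bochner_Integration.integral_nonneg) auto
  have "of_real Q = (LINT t|lborel. complex_of_real ((cmod (ft t - g t))^2))"
    unfolding Q_def by (simp only: integral_complex_of_real)
  also have "\<dots> = (LINT t|lborel. (ft t - g t) * cnj (ft t - g t))"
    by (simp only: complex_norm_square)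
  also have "\<dots> = (LINT t|lborel. ft t * cnj (ft t) - ft t * cnj (g t) - (g t * cnj (ft t) - g t * cnj (g t)))"
    by (intro Bochner_Integration.integral_cong refl) (simp add: algebra_simps)
  also have "\<dots> = of_real If - of_real (S/T) - (of_real (S/T) - of_real (S/T))"
    using i1 i2 i3 i4 I1 I2 I3 I4 by simp
  finally have "of_real Q = (of_real (If - S / T) :: complex)" by simp
  then have "Q = If - S / T" by (simp only: of_real_eq_iff)
  with Q0 If_le T have "S / T \<le> M^2 * T" by simp
  then have "S \<le> T * (T * M^2)" using T by (simp add: field_simps power2_eq_square)
  then show ?thesis by (simp add: S_def c_def w_def P_def)
qed

end



lemma ind_split:
  fixes a P :: real assumes "P > 0"
  shows "indicator {a..<a + real K * P} x = (\<Sum>n<K. indicator {a + real n * P..<a + real n * P + P} x :: real)"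
proof (induction K)
  case 0
  then show ?case by simp
next
  case (Suc K)
  have nn: "0 \<le> P * real K" using assms by simp
  have "indicator {a..<a + real (Suc K) * P} x = (indicator {a..<a + real K * P} x
          + indicator {a + real K * P..<a + real K * P + P} x :: real)"
    using assms apply (auto simp: indicator_def algebra_simps)
    using nn by linarith+
  then show ?case using Suc by simp
qed

context kfun
begin

definition G where "G w = (cmod (Lap f (\<i> * of_real w)))^2"

lemma G_cont: "continuous_on UNIV G"
  unfolding G_def
  by (intro continuous_intros continuous_on_compose2[OF Lap_cont[of UNIV]]) auto

lemma G_meas[measurable]: "G \<in> borel_measurable borel"
  using G_cont by (rule borel_measurable_continuous_onI)

lemma G_nn: "G w \<ge> 0" by (simp add: G_def)

lemma G_trunc:
  fixes a :: real and K :: nat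
  defines "P \<equiv> 2*pi/T"
  shows "(\<integral>\<^sup>+ w. ennreal (G w * indicator {a..<a + real K * P} w) \<partial>lborel) \<le> ennreal (P * (T * (T * M^2)))"
proof -
  have P: "P > 0" using T by (simp add: P_def)
  have "(\<integral>\<^sup>+ w. ennreal (G w * indicator {a..<a + real K * P} w) \<partial>lborel)
      = (\<integral>\<^sup>+ w. (\<Sum>n<K. ennreal (G w * indicator {a + real n * P..<a + real n * P + P} w)) \<partial>lborel)"
    by (intro nn_integral_cong)
       (simp add: ind_split[OF P] sum_distrib_left G_nn)
  also have "\<dots> = (\<Sum>n<K. (\<integral>\<^sup>+ w. ennreal (G w * indicator {a + real n * P..<a + real n * P + P} w) \<partial>lborel))"
    by (intro nn_integral_sum) measurable
  also have "\<dots> = (\<Sum>n<K. (\<integral>\<^sup>+ x. ennreal (G (a + real n * P + x) * indicator {0..<P} x) \<partial>lborel))"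
  proof (intro sum.cong refl)
    fix n
    have "(\<integral>\<^sup>+ w. ennreal (G w * indicator {a + real n * P..<a + real n * P + P} w) \<partial>lborel)
        = (\<integral>\<^sup>+ x. ennreal (G (a + real n * P + 1 * x) * indicator {a + real n * P..<a + real n * P + P} (a + real n * P + 1 * x)) \<partial>lborel)"
      using nn_integral_real_affine[where c=1 and t="a + real n * P" and f="\<lambda>w. ennreal (G w * indicator {a + real n * P..<a + real n * P + P} w)"]
      by simp
    also have "\<dots> = (\<integral>\<^sup>+ x. ennreal (G (a + real n * P + x) * indicator {0..<P} x) \<partial>lborel)"
      by (intro nn_integral_cong) (simp add: indicator_def)
    finally show "(\<integral>\<^sup>+ w. ennreal (G w * indicator {a + real n * P..<a + real n * P + P} w) \<partial>lborel)
        = (\<integral>\<^sup>+ x. ennreal (G (a + real n * P + x) * indicator {0..<P} x) \<partial>lborel)"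
      by simp
  qed
  also have "\<dots> = (\<integral>\<^sup>+ x. (\<Sum>n<K. ennreal (G (a + real n * P + x) * indicator {0..<P} x)) \<partial>lborel)"
    by (intro nn_integral_sum[symmetric]) measurable
  also have "\<dots> \<le> (\<integral>\<^sup>+ x. ennreal ((T * (T * M^2)) * indicator {0..<P} x) \<partial>lborel)"
  proof (intro nn_integral_mono)
    fix x
    have "(\<Sum>n<K. G (a + x + real n * P)) \<le> T * (T * M^2)"
      using bessel[of "a + x" K] by (simp add: G_def P_def)
    then have "(\<Sum>n<K. G (a + real n * P + x) * indicator {0..<P} x) \<le> (T * (T * M^2)) * indicator {0..<P} x"
      by (simp add: sum_distrib_right[symmetric] indicator_def add_ac)
    then show "(\<Sum>n<K. ennreal (G (a + real n * P + x) * indicator {0..<P} x)) \<le> ennreal ((T * (T * M^2)) * indicator {0..<P} x)"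
      by (subst sum_ennreal) (auto simp: G_nn intro!: ennreal_leI)
  qed
  also have "\<dots> = ennreal (T * (T * M^2)) * P"
    using P T M by (simp add: nn_integral_cmult ennreal_mult ennreal_indicator)
  also have "\<dots> = ennreal (P * (T * (T * M^2)))"
    using P T M by (simp add: ennreal_mult mult.commute)
  finally show ?thesis .
qed


lemma G_plancherel:
  shows "integrable lborel G" "(LINT w|lborel. G w) \<le> 2 * pi * T * M^2"
proof -
  define P where "P = 2*pi/T"
  have P: "P > 0" using T by (simp add: P_def)
  define B where "B = P * (T * (T * M^2))"
  have B: "B = 2 * pi * T * M^2" using T by (simp add: B_def P_def power2_eq_square)
  define I where "I N = {-(real N * P)..<-(real N * P) + real (2*N) * P}" for N :: nat
  have inc: "incseq (\<lambda>N w. ennreal (G w * indicator (I N) w))"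
  proof (intro incseq_SucI le_funI)
    fix N w
    have "I N \<subseteq> I (Suc N)" using P by (auto simp: I_def algebra_simps)
    then show "ennreal (G w * indicator (I N) w) \<le> ennreal (G (w) * indicator (I (Suc N)) w)"
      using G_nn[of w] by (intro ennreal_leI mult_left_mono) (auto simp: indicator_def)
  qed
  have sup: "(SUP N. ennreal (G w * indicator (I N) w)) = ennreal (G w)" for w
  proof (rule antisym)
    show "(SUP N. ennreal (G w * indicator (I N) w)) \<le> ennreal (G w)"
      using G_nn[of w] by (intro SUP_least ennreal_leI) (auto simp: indicator_def)
    obtain N :: nat where N: "\<bar>w\<bar> / P < real N" using reals_Archimedean2 by blast
    then have "\<bar>w\<bar> < real N * P" using P by (simp add: field_simps)
    then have "w \<in> I N" by (auto simp: I_def algebra_simps)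
    then have "ennreal (G w) = ennreal (G w * indicator (I N) w)" by simp
    also have "\<dots> \<le> (SUP N. ennreal (G w * indicator (I N) w))" by (rule SUP_upper) simp
    finally show "ennreal (G w) \<le> (SUP N. ennreal (G w * indicator (I N) w))" .
  qed
  have "(\<integral>\<^sup>+ w. ennreal (G w) \<partial>lborel) = (\<integral>\<^sup>+ w. (SUP N. ennreal (G w * indicator (I N) w)) \<partial>lborel)"
    by (simp add: sup)
  also have "\<dots> = (SUP N. (\<integral>\<^sup>+ w. ennreal (G w * indicator (I N) w) \<partial>lborel))"
    by (rule nn_integral_monotone_convergence_SUP[OF inc]) (simp add: I_def)
  also have "\<dots> \<le> ennreal B"
  proof (rule SUP_least)
    fix N :: nat
    show "(\<integral>\<^sup>+ w. ennreal (G w * indicator (I N) w) \<partial>lborel) \<le> ennreal B"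
      unfolding I_def B_def P_def by (rule G_trunc)
  qed
  finally have nn: "(\<integral>\<^sup>+ w. ennreal (G w) \<partial>lborel) \<le> ennreal B" .
  show int: "integrable lborel G"
    by (rule integrableI_nonneg) (use nn G_nn in \<open>auto simp: top_unique intro: le_less_trans\<close>)
  have "ennreal (LINT w|lborel. G w) \<le> ennreal B"
    using nn nn_integral_eq_integral[OF int] G_nn by simp
  then have "(LINT w|lborel. G w) \<le> B"
    using B T M by (simp add: ennreal_le_iff)
  then show "(LINT w|lborel. G w) \<le> 2 * pi * T * M^2" using B by simp
qed

end



lemma V_cont: "\<gamma> > 0 \<Longrightarrow> continuous_on {p. Re p \<ge> 0} (Vfun T \<gamma>)"
  by (rule holomorphic_on_imp_continuous_on[OF holomorphic_on_subset[OF V_holo]]) auto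

lemma part_iii:
  assumes T: "T > 0"
  shows "bdd_above ((\<lambda>c. cmod (Vfun T c (\<i> * of_real w))) ` {0<..}) \<and>
        (SUP c\<in>{0<..}. cmod (Vfun T c (\<i> * of_real w))) \<le> exp (T * \<bar>w\<bar>)"
proof -
  have b: "cmod (Vfun T c (\<i> * of_real w)) \<le> exp (T * \<bar>w\<bar>)" if c: "c > 0" for c
  proof -
    have e: "\<bar>w\<bar> * (c - \<bar>w\<bar>)^2 = \<bar>w\<bar> * (c^2 + w^2) - 2 * c * w^2"
      by (simp add: power2_eq_square algebra_simps abs_mult_self_eq)
    have "0 \<le> \<bar>w\<bar> * (c - \<bar>w\<bar>)^2" by simp
    then have "2 * c * w^2 \<le> \<bar>w\<bar> * (c^2 + w^2)" unfolding e by simp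
    then have "2 * T * c * w^2 \<le> (T * \<bar>w\<bar>) * (c^2 + w^2)"
      using T mult_left_mono[of "2 * c * w^2" "\<bar>w\<bar> * (c^2 + w^2)" T] by (simp add: mult_ac)
    moreover have "c^2 + w^2 > 0" using c by (simp add: add_pos_nonneg)
    ultimately have "2 * T * c * w^2 / (c^2 + w^2) \<le> T * \<bar>w\<bar>"
      by (simp add: divide_le_eq)
    then show ?thesis using norm_V_iw[OF c, of T w] by simp
  qed
  have bdd: "bdd_above ((\<lambda>c. cmod (Vfun T c (\<i> * of_real w))) ` {0<..})"
    using b by (intro bdd_aboveI[of _ "exp (T * \<bar>w\<bar>)"]) auto
  moreover have "(SUP c\<in>{0<..}. cmod (Vfun T c (\<i> * of_real w))) \<le> exp (T * \<bar>w\<bar>)"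
    using b by (intro cSUP_least) auto
  ultimately show ?thesis by blast
qed

lemma part_iv:
  assumes T: "T > 0"
  shows "((\<lambda>c. Vfun T c (\<i> * of_real w)) \<longlongrightarrow> 1) at_top"
proof -
  have "((\<lambda>c. hfun T c (\<i> * of_real w)) \<longlongrightarrow> 0) at_top"
  proof (rule Lim_null_comparison)
    show "\<forall>\<^sub>F c in at_top. cmod (hfun T c (\<i> * of_real w)) \<le> 2*T*w^2/c"
      using eventually_gt_at_top[of 0] by eventually_elim (use T norm_h_iw in auto)
    show "((\<lambda>c. 2*T*w^2/c) \<longlongrightarrow> 0) at_top"
      by (intro tendsto_divide_0[OF tendsto_const] filterlim_at_top_imp_at_infinity filterlim_ident)
  qed
  then have "((\<lambda>c. exp (hfun T c (\<i> * of_real w))) \<longlongrightarrow> exp 0) at_top"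
    by (rule tendsto_exp)
  then show ?thesis by (simp add: Vfun_def)
qed

lemma part_v:
  assumes T: "T > 0" and e: "\<epsilon> > 0" and O: "\<Omega> > 0"
  shows "\<exists>c>0. \<forall>\<omega>\<in>{-\<Omega>..\<Omega>}. cmod (Vfun T c (\<i> * of_real \<omega>) - 1) \<le> \<epsilon>"
proof -
  define a where "a = T*\<Omega>^2"
  have a: "a > 0" using T O by (simp add: a_def)
  define c where "c = 8*a + 4*a/\<epsilon> + 1"
  have ae: "4*a/\<epsilon> \<ge> 0" using a e by simp
  have c: "c > 0" using a ae by (simp add: c_def)
  define q where "q = 2*a/c"
  have q0: "q \<ge> 0" using a c by (simp add: q_def)
  have q1: "q \<le> 1/4" unfolding q_def pos_divide_le_eq[OF c] using a ae by (simp add: c_def)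
  have "\<epsilon> * (4*a/\<epsilon>) = 4*a" using e by simp
  then have q2: "q \<le> \<epsilon>/2" unfolding q_def pos_divide_le_eq[OF c] using a e mult_pos_pos[OF e a]
    by (simp add: c_def algebra_simps)
  show ?thesis
  proof (intro exI[of _ c] conjI c ballI)
    fix \<omega> assume w: "\<omega> \<in> {-\<Omega>..\<Omega>}"
    define z where "z = hfun T c (\<i> * of_real \<omega>)"
    have "\<omega>^2 \<le> \<Omega>^2" using w by (intro power2_le_iff_abs_le[THEN iffD2]) (use O in auto)
    then have "2*T*\<omega>^2/c \<le> q" unfolding q_def a_def using T c
      by (intro divide_right_mono mult_left_mono) auto
    then have zq: "cmod z \<le> q" using norm_h_iw[OF c T, of \<omega>] unfolding z_def by linarith
    have "cmod (exp z - 1) \<le> cmod (exp z - 1 - z) + cmod z"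
      using norm_triangle_ineq[of "exp z - 1 - z" z] by simp
    also have "\<dots> \<le> cmod z ^ 2 + cmod z"
      using norm_exp_quad[of z] zq q1 by simp
    also have "\<dots> \<le> q^2 + q" using zq by (intro add_mono power_mono) auto
    also have "\<dots> \<le> q/4 + q" using mult_left_mono[OF q1 q0] by (simp add: power2_eq_square)
    also have "\<dots> \<le> \<epsilon>" using q2 e by simp
    finally show "cmod (Vfun T c (\<i> * of_real \<omega>) - 1) \<le> \<epsilon>" by (simp add: Vfun_def z_def)
  qed
qed



theorem lemma1:
  fixes T \<gamma> :: real and k :: "real \<Rightarrow> real"
  assumes "T > 0" and "\<gamma> > 0" and "k \<in> Kclass T"
  shows
    "(hardy_inf (Vfun T \<gamma>) \<and>
     (\<exists>Khat. hardy 2 Khat \<and> hardy_inf Khat \<and>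
        continuous_on {p. Re p \<ge> 0} Khat \<and>
        (\<forall>\<omega>::real. Khat (\<i> * of_real \<omega>) = Vfun T \<gamma> (\<i> * of_real \<omega>) * fourier k \<omega>))) \<and>
    (\<forall>\<omega>::real. cmod (Vfun T \<gamma> (\<i> * of_real \<omega>)) =
        exp (2 * T * \<gamma> * \<omega>^2 / (\<gamma>^2 + \<omega>^2))) \<and>
    (\<forall>\<omega>::real. bdd_above ((\<lambda>c. cmod (Vfun T c (\<i> * of_real \<omega>))) ` {0<..}) \<and>
        (SUP c\<in>{0<..}. cmod (Vfun T c (\<i> * of_real \<omega>))) \<le> exp (T * \<bar>\<omega>\<bar>)) \<and>
    (\<forall>\<omega>::real. ((\<lambda>c. Vfun T c (\<i> * of_real \<omega>)) \<longlongrightarrow> 1) at_top) \<and>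
    (\<forall>\<epsilon>>0. \<forall>\<Omega>>0. \<exists>c>0. \<forall>\<omega>\<in>{-\<Omega>..\<Omega>}.
        cmod (Vfun T c (\<i> * of_real \<omega>) - 1) \<le> \<epsilon>)"
proof -
  note T = assms(1) and g = assms(2)
  obtain B where km[measurable]: "k \<in> borel_measurable lborel" and kB: "AE t in lborel. \<bar>k t\<bar> \<le> B"
    and k0: "\<And>t. t \<notin> {-T..0} \<Longrightarrow> k t = 0"
    using assms(3) unfolding Kclass_def by blast
  define M where "M = max B 0"
  have M: "M \<ge> 0" by (simp add: M_def)
  have kae: "AE t in lborel. \<bar>k t\<bar> \<le> M * indicator {-T..0} t"
    using kB by eventually_elim (auto simp: M_def indicator_def k0)
  interpret K: kfun T M k using T M km kae by unfold_locales auto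
  have rhp_sub: "rhp \<subseteq> {p. Re p > - \<gamma>}" using g by (auto simp: rhp_def)
  have Vinf: "hardy_inf (Vfun T \<gamma>)"
    unfolding hardy_inf_def
  proof
    show "Vfun T \<gamma> holomorphic_on rhp" by (rule holomorphic_on_subset[OF V_holo[OF g] rhp_sub])
    show "\<exists>B. \<forall>p\<in>rhp. cmod (Vfun T \<gamma> p) \<le> B"
    proof (intro exI ballI)
      fix p assume "p \<in> rhp"
      then have "Re p \<ge> 0" by (simp add: rhp_def)
      then show "cmod (Vfun T \<gamma> p) \<le> exp (2*T*\<gamma>)"
        using norm_V_le[OF T g, of p] T by (smt (verit) exp_le_cancel_iff mult_nonneg_nonneg)
    qed
  qed
  define Khat where "Khat p = Vfun T \<gamma> p * Lap k p" for p
  have Kholo: "Khat holomorphic_on rhp"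
    unfolding Khat_def
    by (intro holomorphic_on_mult holomorphic_on_subset[OF V_holo[OF g] rhp_sub] K.Lap_holo)
  have Kbound: "cmod (Khat p) \<le> exp (2*T*\<gamma> - T * Re p) * M * T" if p: "Re p \<ge> 0" for p
  proof -
    have "cmod (Khat p) \<le> exp (2*T*\<gamma> - 2*T*Re p) * (exp (T * \<bar>Re p\<bar>) * M * T)"
      unfolding Khat_def norm_mult
      by (intro mult_mono norm_V_le[OF T g p] K.Lap_bound) auto
    also have "\<dots> = exp (2*T*\<gamma> - 2*T*Re p + T * \<bar>Re p\<bar>) * M * T"
      by (simp only: exp_add mult_ac)
    also have "2*T*\<gamma> - 2*T*Re p + T * \<bar>Re p\<bar> = 2*T*\<gamma> - T * Re p"
      using p by simp
    finally show ?thesis .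
  qed
  have Kinf: "hardy_inf Khat"
    unfolding hardy_inf_def
  proof (intro conjI Kholo exI ballI)
    fix p assume "p \<in> rhp"
    then have p: "Re p \<ge> 0" by (simp add: rhp_def)
    have "exp (2*T*\<gamma> - T * Re p) * M * T \<le> exp (2*T*\<gamma>) * M * T"
      using p T M by (intro mult_right_mono) auto
    then show "cmod (Khat p) \<le> exp (2*T*\<gamma>) * M * T" using Kbound[OF p] by linarith
  qed
  have Kcont: "continuous_on {p. Re p \<ge> 0} Khat"
    unfolding Khat_def by (intro continuous_on_mult V_cont[OF g] K.Lap_cont)
  have Kbd: "Khat (\<i> * of_real w) = Vfun T \<gamma> (\<i> * of_real w) * fourier k w" for w
    by (simp add: Khat_def Lap_def fourier_def)
  define Bd where "Bd = 2 * pi * T * M^2 * exp (4*T*\<gamma>)"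
  have H2s: "integrable lborel (\<lambda>w. cmod (Khat (Complex s w)) powr 2) \<and>
      (LINT w|lborel. cmod (Khat (Complex s w)) powr 2) \<le> Bd" if s: "s > 0" for s
  proof -
    define fs where "fs t = exp (- s * t) * k t" for t
    have fsm[measurable]: "fs \<in> borel_measurable lborel" unfolding fs_def by measurable
    have fsae: "AE t in lborel. \<bar>fs t\<bar> \<le> (M * exp (T * s)) * indicator {-T..0} t"
      using kae
    proof eventually_elim
      case (elim t)
      show ?case
      proof (cases "t \<in> {-T..0}")
        case True
        have "s * (- t) \<le> s * T" using True s by (intro mult_left_mono) auto
        then have "exp (- s * t) \<le> exp (T * s)" by (simp add: mult.commute)
        then have "\<bar>fs t\<bar> \<le> exp (T * s) * M"
          using elim True unfolding fs_def abs_mult by (intro mult_mono) auto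
        then show ?thesis using True by (simp add: mult.commute)
      next
        case False
        then show ?thesis by (simp add: fs_def k0)
      qed
    qed
    interpret S: kfun T "M * exp (T * s)" fs using T M fsm fsae by unfold_locales auto
    have LL: "Lap k (Complex s w) = Lap fs (\<i> * of_real w)" for w
      unfolding Lap_def
    proof (intro Bochner_Integration.integral_cong refl)
      fix t
      have "exp (- (Complex s w * of_real t)) = exp (- (\<i> * of_real w * of_real t)) * of_real (exp (- s * t))"
      proof -
        have "- (Complex s w * of_real t) = of_real (- s * t) + (- (\<i> * of_real w * of_real t))"
          by (simp add: Complex_eq algebra_simps)
        then have "exp (- (Complex s w * of_real t)) = exp (of_real (- s * t)) * exp (- (\<i> * of_real w * of_real t))"
          by (simp only: exp_add)
        then show ?thesis by (simp only: exp_of_real mult.commute)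
      qed
      then show "exp (- (Complex s w * of_real t)) * of_real (k t) = exp (- (\<i> * of_real w * of_real t)) * of_real (fs t)"
        by (simp add: fs_def)
    qed
    define eK where "eK = exp (2 * T * \<gamma> - 2 * T * s)"
    have ptw: "cmod (Khat (Complex s w)) powr 2 \<le> eK^2 * S.G w" for w
    proof -
      have "cmod (Khat (Complex s w)) \<le> eK * cmod (Lap fs (\<i> * of_real w))"
        unfolding Khat_def norm_mult LL[symmetric] eK_def
        using norm_V_le[OF T g, of "Complex s w"] s by (intro mult_right_mono) auto
      then have "(cmod (Khat (Complex s w)))^2 \<le> (eK * cmod (Lap fs (\<i> * of_real w)))^2"
        by (intro power_mono) auto
      then show ?thesis by (simp add: S.G_def power_mult_distrib)
    qed
    have Kc: "continuous_on UNIV (\<lambda>w. Khat (Complex s w))"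
    proof -
      have eq: "(\<lambda>w. Complex s w) = (\<lambda>w. of_real s + \<i> * of_real w)"
        by (auto simp: Complex_eq)
      show ?thesis unfolding eq
        by (rule continuous_on_compose2[OF Kcont]) (use s in \<open>auto intro!: continuous_intros\<close>)
    qed
    have [measurable]: "(\<lambda>w. Khat (Complex s w)) \<in> borel_measurable borel"
      using Kc by (rule borel_measurable_continuous_onI)
    have int: "integrable lborel (\<lambda>w. cmod (Khat (Complex s w)) powr 2)"
    proof (rule Bochner_Integration.integrable_bound)
      show "integrable lborel (\<lambda>w. eK^2 * S.G w)"
        by (intro integrable_mult_right S.G_plancherel(1))
      show "AE w in lborel. norm (cmod (Khat (Complex s w)) powr 2) \<le> norm (eK^2 * S.G w)"
        using ptw S.G_nn by (auto intro!: AE_I2 order_trans[OF _ abs_ge_self])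
    qed measurable
    have "(LINT w|lborel. cmod (Khat (Complex s w)) powr 2) \<le> (LINT w|lborel. eK^2 * S.G w)"
      by (intro integral_mono int integrable_mult_right S.G_plancherel(1) ptw)
    also have "\<dots> = eK^2 * (LINT w|lborel. S.G w)" by simp
    also have "\<dots> \<le> eK^2 * (2 * pi * T * (M * exp (T * s))^2)"
      by (intro mult_left_mono S.G_plancherel(2)) auto
    also have "\<dots> = 2 * pi * T * M^2 * exp (4 * T * \<gamma> - 2 * T * s)"
      by (simp add: eK_def power2_eq_square mult_exp_exp algebra_simps)
    also have "\<dots> \<le> Bd" unfolding Bd_def
      using T s M by (intro mult_left_mono) auto
    finally show ?thesis using int by simp
  qed
  have H2: "hardy 2 Khat"
    unfolding hardy_def
  proof (intro conjI Kholo allI impI exI[of _ "Bd powr (1/2)"])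
    fix s :: real assume s: "s > 0"
    show "integrable lborel (\<lambda>w. cmod (Khat (Complex s w)) powr 2)" using H2s[OF s] by simp
    show "(LINT w|lborel. cmod (Khat (Complex s w)) powr 2) powr (1 / 2) \<le> Bd powr (1 / 2)"
      using H2s[OF s] by (intro powr_mono2) (auto intro!: Bochner_Integration.integral_nonneg)
  qed
  show ?thesis
    using Vinf H2 Kinf Kcont Kbd norm_V_iw[OF g, of T] part_iii[OF T] part_iv[OF T] part_v[OF T]
    by blast
qed


end
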